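(* Let $K_1,K_2$ be compact spaces, $G$ a compact group with Haar probability measure $\lambda$, $f_i\colon K_i\to G$ continuous surjections and $\mu_i\in P(K_i)$ with $f_i[\mu_i]=\lambda$ ($i=1,2$), and $f=f_1\times f_2\colon K_1\times K_2\to G\times G$. For a finite Borel partition $\mathcal E$ of $G$ and $y\in G$ define, for $D\in Bor(K_1\times K_2)$, $$\mu_{y,\mathcal E}(D)=\sum_{E\in\mathcal E^\ast}\frac{(\mu_1\otimes\mu_2)\big(D\cap(f_1^{-1}[E]\times f_2^{-1}[E\oplus y])\big)}{\lambda(E)}.$$ Then $\mu_{y,\mathcal E}\in P(K_1\times K_2)$, $f[\mu_{y,\mathcal E}]=\nu_{y,\mathcal E}$, and $\mu_{y,\mathcal E}(A\times K_2)=\mu_1(A)$, $\mu_{y,\mathcal E}(K_1\times B)=\mu_2(B)$ for all Borel $A\subseteq K_1$, $B\subseteq K_2$.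
   Context: $G=(G,\oplus)$ is a compact Hausdorff group with Haar probability measure $\lambda$; $E\oplus y=\{e\oplus y:e\in E\}$. $\mathcal E^\ast$ is the set of $E\in\mathcal E$ with $\lambda(E)>0$. $P(X)$ is the set of regular Borel probability measures on the compact space $X$; $g[\mu](A)=\mu(g^{-1}[A])$ is the image measure. $\mu_1\otimes\mu_2$ and $\lambda_2=\lambda\otimes\lambda$ denote the product measures, extended uniquely to regular Borel probability measures. $\nu_{y,\mathcal E}$ is the measure on $G\times G$ given by $\nu_{y,\mathcal E}(D)=\sum_{E\in\mathcal E^\ast}\lambda_2\big(D\cap(E\times(E\oplus y))\big)/\lambda(E)$. *)

theory Defs
  imports "HOL-Probability.Probability"
begin

definition regular_borel_prob :: "'a::topological_space measure \<Rightarrow> bool" where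
  "regular_borel_prob M \<longleftrightarrow>
     prob_space M \<and> sets M = sets borel \<and>
     (\<forall>A\<in>sets M. emeasure M A = (SUP K\<in>{K. K \<subseteq> A \<and> compact K}. emeasure M K))"

text \<open>Product of two regular Borel probability measures, extended (uniquely) to a regular
  Borel probability measure on the Borel sets of the product space: the unique element of
  P(X\<times>Y) that agrees with the product measure on the product sigma-algebra.\<close>
definition reg_prod :: "'a::topological_space measure \<Rightarrow> 'b::topological_space measure
    \<Rightarrow> ('a \<times> 'b) measure" where
  "reg_prod M N = (THE R. regular_borel_prob R \<and>
      (\<forall>D\<in>sets (M \<Otimes>\<^sub>M N). emeasure R D = emeasure (M \<Otimes>\<^sub>M N) D))"

text \<open>Haar probability measure on a compact group (bi-invariant, as Haar measure on a compact
  group is).\<close>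
definition haar_prob :: "'g::topological_group_add measure \<Rightarrow> bool" where
  "haar_prob L \<longleftrightarrow> regular_borel_prob L \<and>
     (\<forall>E\<in>sets borel. \<forall>y. measure L ((\<lambda>e. e + y) ` E) = measure L E
                        \<and> measure L ((\<lambda>e. y + e) ` E) = measure L E)"

definition finite_borel_partition :: "'a::topological_space set set \<Rightarrow> bool" where
  "finite_borel_partition P \<longleftrightarrow> finite P \<and> P \<subseteq> sets borel \<and> \<Union>P = UNIV \<and>
     (\<forall>E\<in>P. \<forall>F\<in>P. E \<noteq> F \<longrightarrow> E \<inter> F = {})"

definition image_measure_eq :: "('a \<Rightarrow> 'b::topological_space) \<Rightarrow> 'a measure \<Rightarrow> ('b set \<Rightarrow> real) \<Rightarrow> bool" where
  "image_measure_eq g M \<nu> \<longleftrightarrow> (\<forall>D\<in>sets borel. measure M (g -` D) = \<nu> D)"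

definition pos_part :: "'g measure \<Rightarrow> 'g set set \<Rightarrow> 'g set set" where
  "pos_part L P = {E\<in>P. measure L E > 0}"

definition nu_yE :: "'g::topological_group_add measure \<Rightarrow> 'g \<Rightarrow> 'g set set \<Rightarrow> ('g \<times> 'g) set \<Rightarrow> real" where
  "nu_yE L y P D = (\<Sum>E\<in>pos_part L P.
      measure (reg_prod L L) (D \<inter> (E \<times> ((\<lambda>e. e + y) ` E))) / measure L E)"

definition mu_yE :: "'g::topological_group_add measure \<Rightarrow> 'a::topological_space measure \<Rightarrow>
    'b::topological_space measure \<Rightarrow> ('a \<Rightarrow> 'g) \<Rightarrow> ('b \<Rightarrow> 'g) \<Rightarrow> 'g \<Rightarrow> 'g set set \<Rightarrow>
    ('a \<times> 'b) set \<Rightarrow> real" where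
  "mu_yE L M1 M2 f1 f2 y P D = (\<Sum>E\<in>pos_part L P.
      measure (reg_prod M1 M2) (D \<inter> (f1 -` E \<times> f2 -` ((\<lambda>e. e + y) ` E))) / measure L E)"

end

theory Submission
  imports Defs
begin

lemma compact_borel: "compact (K::'c::t2_space set) \<Longrightarrow> K \<in> sets borel"
  by (simp add: borel_closed compact_imp_closed)

lemma rbp_basic:
  assumes "regular_borel_prob M"
  shows "prob_space M" "sets M = sets borel" "space M = UNIV"
  using assms unfolding regular_borel_prob_def
  by (auto dest: sets_eq_imp_space_eq)

lemma rbp_inner:
  fixes M :: "'c::t2_space measure"
  assumes R: "regular_borel_prob M" and A: "A \<in> sets borel" and e: "e > 0"
  shows "\<exists>K. compact K \<and> K \<subseteq> A \<and> measure M A < measure M K + e"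
proof (rule ccontr)
  assume neg: "\<not> ?thesis"
  interpret prob_space M using rbp_basic[OF R] by simp
  have sM: "sets M = sets borel" using rbp_basic[OF R] by simp
  have eqS: "emeasure M A = (SUP K\<in>{K. K \<subseteq> A \<and> compact K}. emeasure M K)"
    using R A unfolding regular_borel_prob_def by auto
  show False
  proof (cases "measure M A < e")
    case True
    then show ?thesis using neg by (metis compact_empty empty_subsetI add.commute add_0 measure_empty)
  next
    case False
    have "(SUP K\<in>{K. K \<subseteq> A \<and> compact K}. emeasure M K) \<le> ennreal (measure M A - e)"
    proof (rule SUP_least)
      fix K assume K: "K \<in> {K. K \<subseteq> A \<and> compact K}"
      then have "\<not> measure M A < measure M K + e" using neg by blast
      then have "measure M K \<le> measure M A - e" by linarith
      then show "emeasure M K \<le> ennreal (measure M A - e)"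
        by (simp add: emeasure_eq_measure ennreal_leI)
    qed
    then have "ennreal (measure M A) \<le> ennreal (measure M A - e)"
      using eqS by (simp add: emeasure_eq_measure)
    moreover have "0 \<le> measure M A - e" using False by linarith
    ultimately have "measure M A \<le> measure M A - e"
      using ennreal_le_iff by blast
    then show False using e by simp
  qed
qed

lemma rbp_outer:
  fixes M :: "'c::t2_space measure"
  assumes R: "regular_borel_prob M" and A: "A \<in> sets borel" and e: "e > 0"
  shows "\<exists>U. open U \<and> A \<subseteq> U \<and> measure M U < measure M A + e"
proof -
  interpret prob_space M using rbp_basic[OF R] by simp
  have sM: "sets M = sets borel" and sp: "space M = UNIV" using rbp_basic[OF R] by auto
  have cA: "- A \<in> sets borel" using A by auto
  obtain K where K: "compact K" "K \<subseteq> - A" "measure M (- A) < measure M K + e"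
    using rbp_inner[OF R cA e] by blast
  have Kb: "K \<in> sets M" using compact_borel[OF K(1)] sM by simp
  have "measure M (- K) = 1 - measure M K"
    using prob_compl[OF Kb] sp by (simp add: Compl_eq_Diff_UNIV)
  moreover have "measure M (- A) = 1 - measure M A"
    using prob_compl[of A] A sM sp by (simp add: Compl_eq_Diff_UNIV)
  moreover have "open (- K)" using K(1) by (simp add: compact_imp_closed open_Compl)
  ultimately show ?thesis using K(2,3) by (intro exI[of _ "- K"] conjI) auto
qed

lemma rbp_intro:
  fixes M :: "'c::t2_space measure"
  assumes P: "prob_space M" and S: "sets M = sets borel"
    and I: "\<And>A e. A \<in> sets borel \<Longrightarrow> e > 0 \<Longrightarrow> \<exists>K. compact K \<and> K \<subseteq> A \<and> measure M A < measure M K + e"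
  shows "regular_borel_prob M"
  unfolding regular_borel_prob_def
proof (intro conjI ballI P S)
  interpret prob_space M using P .
  fix A assume A: "A \<in> sets M"
  show "emeasure M A = (SUP K\<in>{K. K \<subseteq> A \<and> compact K}. emeasure M K)"
  proof (rule antisym)
    show "(SUP K\<in>{K. K \<subseteq> A \<and> compact K}. emeasure M K) \<le> emeasure M A"
      by (rule SUP_least) (use A S compact_borel in \<open>auto intro!: emeasure_mono\<close>)
    show "emeasure M A \<le> (SUP K\<in>{K. K \<subseteq> A \<and> compact K}. emeasure M K)"
    proof (rule ennreal_le_epsilon)
      fix e :: real assume e: "0 < e"
      obtain K where K: "compact K" "K \<subseteq> A" "measure M A < measure M K + e"
        using I[of A e] A S e by auto
      have "emeasure M A = ennreal (measure M A)" by (simp add: emeasure_eq_measure)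
      also have "\<dots> \<le> ennreal (measure M K + e)"
        using K(3) by (intro ennreal_leI) simp
      also have "\<dots> = ennreal (measure M K) + ennreal e"
        using e by (intro ennreal_plus) auto
      also have "ennreal (measure M K) \<le> (SUP K\<in>{K. K \<subseteq> A \<and> compact K}. emeasure M K)"
        using K by (intro SUP_upper2[of K]) (auto simp: emeasure_eq_measure)
      finally show "emeasure M A \<le> (SUP K\<in>{K. K \<subseteq> A \<and> compact K}. emeasure M K) + ennreal e"
        by (simp add: add_right_mono)
    qed
  qed
qed

lemma rbp_dominated:
  fixes Q R :: "'c::t2_space measure"
  assumes Q: "regular_borel_prob Q" and P: "prob_space R" and S: "sets R = sets borel"
    and c: "c \<ge> 0" and dom: "\<And>A. A \<in> sets borel \<Longrightarrow> measure R A \<le> c * measure Q A"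
  shows "regular_borel_prob R"
proof (rule rbp_intro[OF P S])
  interpret R: prob_space R using P .
  interpret Q: prob_space Q using rbp_basic[OF Q] by simp
  have sQ: "sets Q = sets borel" using rbp_basic[OF Q] by simp
  fix A :: "'c set" and e :: real assume A: "A \<in> sets borel" and e: "e > 0"
  have e': "e / (c + 1) > 0" using e c by simp
  obtain K where K: "compact K" "K \<subseteq> A" "measure Q A < measure Q K + e / (c + 1)"
    using rbp_inner[OF Q A e'] by blast
  have Kb: "K \<in> sets borel" using compact_borel[OF K(1)] .
  have "measure R A = measure R K + measure R (A - K)"
    using R.finite_measure_Diff[of A K] A Kb K(2) S by auto
  also have "measure R (A - K) \<le> c * measure Q (A - K)" using dom A Kb by auto
  also have "measure Q (A - K) = measure Q A - measure Q K"
    using Q.finite_measure_Diff[of A K] A Kb K(2) sQ by auto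
  also have "c * (measure Q A - measure Q K) \<le> c * (e / (c + 1))"
    using K(3) c by (intro mult_left_mono) auto
  also have "c * (e / (c + 1)) < e" using c e by (simp add: field_simps)
  finally show "\<exists>K. compact K \<and> K \<subseteq> A \<and> measure R A < measure R K + e"
    using K by auto
qed

lemma rbp_distr:
  fixes Q :: "'c::t2_space measure" and f :: "'c \<Rightarrow> 'd::t2_space"
  assumes Q: "regular_borel_prob Q" and f: "continuous_on UNIV f"
  shows "regular_borel_prob (distr Q borel f)"
proof -
  interpret Q: prob_space Q using rbp_basic[OF Q] by simp
  have sQ: "sets Q = sets borel" and sp: "space Q = UNIV" using rbp_basic[OF Q] by auto
  have fm: "f \<in> measurable Q borel"
    using borel_measurable_continuous_onI[OF f] measurable_cong_sets[OF sQ refl] by blast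
  show ?thesis
  proof (rule rbp_intro)
    show "prob_space (distr Q borel f)" using Q.prob_space_distr[OF fm] .
    show "sets (distr Q borel f) = sets borel" by simp
    fix A :: "'d set" and e :: real assume A: "A \<in> sets borel" and e: "e > 0"
    have fA: "f -` A \<in> sets borel" using fm A sQ sp by (metis measurable_sets Int_UNIV_right)
    obtain K where K: "compact K" "K \<subseteq> f -` A" "measure Q (f -` A) < measure Q K + e"
      using rbp_inner[OF Q fA e] by blast
    have cK: "compact (f ` K)" using K(1) f by (metis compact_continuous_image continuous_on_subset subset_UNIV)
    have "measure Q K \<le> measure Q (f -` (f ` K))"
      using compact_borel[OF cK] fm sQ sp by (intro Q.finite_measure_mono) (auto, metis Int_UNIV_right measurable_sets)
    moreover have "measure (distr Q borel f) (f ` K) = measure Q (f -` (f ` K))"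
      using compact_borel[OF cK] fm sp by (simp add: measure_distr)
    moreover have "measure (distr Q borel f) A = measure Q (f -` A)"
      using A fm sp by (simp add: measure_distr)
    ultimately show "\<exists>K. compact K \<and> K \<subseteq> A \<and> measure (distr Q borel f) A < measure (distr Q borel f) K + e"
      using K cK by (intro exI[of _ "f ` K"]) auto
  qed
qed

lemma closed_compact_univ:
  assumes "compact (UNIV :: 'c::topological_space set)" "closed (S :: 'c set)"
  shows "compact S"
  using compact_Int_closed[OF assms] by simp

definition appr :: "'c::topological_space measure \<Rightarrow> 'c set \<Rightarrow> bool" where
  "appr R D \<longleftrightarrow> (\<forall>e>0. \<exists>K. compact K \<and> K \<subseteq> D \<and> measure R D < measure R K + e)"

lemma appr_empty: "appr R {}"
  unfolding appr_def by (intro allI impI exI[of _ "{}"]) auto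

lemma appr_compact: "compact D \<Longrightarrow> appr R D"
  unfolding appr_def by (intro allI impI exI[of _ D]) auto

lemma appr_Un:
  fixes R :: "'c::t2_space measure"
  assumes F: "finite_measure R" and S: "sets R = sets borel"
    and D1: "D1 \<in> sets borel" and D2: "D2 \<in> sets borel"
    and a1: "appr R D1" and a2: "appr R D2"
  shows "appr R (D1 \<union> D2)"
  unfolding appr_def
proof (intro allI impI)
  interpret finite_measure R by (rule F)
  fix e :: real assume e: "e > 0"
  obtain K1 where K1: "compact K1" "K1 \<subseteq> D1" "measure R D1 < measure R K1 + e/2"
    using a1 e unfolding appr_def by (meson half_gt_zero)
  obtain K2 where K2: "compact K2" "K2 \<subseteq> D2" "measure R D2 < measure R K2 + e/2"
    using a2 e unfolding appr_def by (meson half_gt_zero)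
  have b: "K1 \<in> sets R" "K2 \<in> sets R" "D1 \<in> sets R" "D2 \<in> sets R"
    using compact_borel K1 K2 D1 D2 S by auto
  have "measure R (D1 \<union> D2) \<le> measure R ((K1 \<union> K2) \<union> ((D1 - K1) \<union> (D2 - K2)))"
    using b by (intro finite_measure_mono) auto
  also have "\<dots> \<le> measure R (K1 \<union> K2) + measure R ((D1 - K1) \<union> (D2 - K2))"
    using b by (intro measure_subadditive) (auto simp: emeasure_finite)
  also have "measure R ((D1 - K1) \<union> (D2 - K2)) \<le> measure R (D1 - K1) + measure R (D2 - K2)"
    using b by (intro measure_subadditive) (auto simp: emeasure_finite)
  also have "measure R (D1 - K1) = measure R D1 - measure R K1"
    using b K1 by (intro finite_measure_Diff) auto
  also have "measure R (D2 - K2) = measure R D2 - measure R K2"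
    using b K2 by (intro finite_measure_Diff) auto
  finally have "measure R (D1 \<union> D2) < measure R (K1 \<union> K2) + e"
    using K1(3) K2(3) by linarith
  then show "\<exists>K. compact K \<and> K \<subseteq> D1 \<union> D2 \<and> measure R (D1 \<union> D2) < measure R K + e"
    using K1 K2 by (intro exI[of _ "K1 \<union> K2"]) auto
qed

lemma appr_finite_Union:
  fixes R :: "'c::t2_space measure"
  assumes F: "finite_measure R" and S: "sets R = sets borel"
  shows "finite T \<Longrightarrow> (\<And>D. D \<in> T \<Longrightarrow> D \<in> sets borel \<and> appr R D) \<Longrightarrow> appr R (\<Union>T) \<and> \<Union>T \<in> sets borel"
proof (induction T rule: finite_induct)
  case empty
  then show ?case using appr_empty by simp
next
  case (insert x T)
  then show ?case using appr_Un[OF F S, of x "\<Union>T"] by auto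
qed

lemma appr_all:
  fixes R :: "'c::t2_space measure"
  assumes F: "finite_measure R" and S: "sets R = sets borel"
    and cU: "compact (UNIV :: 'c set)"
    and op: "\<And>W. open W \<Longrightarrow> appr R W"
    and D: "D \<in> sets borel"
  shows "appr R D"
proof -
  interpret finite_measure R by (rule F)
  have sp: "space R = UNIV" using sets_eq_imp_space_eq[OF S] by simp
  have "D \<in> sigma_sets UNIV {S. open S}" using D sets_borel by auto
  then have "appr R D \<and> appr R (- D)"
  proof (induction rule: sigma_sets.induct)
    case (Basic a)
    have "compact (- a)" using closed_compact_univ[OF cU] Basic by (simp add: closed_Compl)
    then show ?case using op Basic appr_compact by auto
  next
    case Empty
    then show ?case using appr_empty appr_compact cU by auto
  next
    case (Compl a)
    then show ?case by (simp add: Compl_eq_Diff_UNIV[symmetric])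
  next
    case (Union A)
    have Ab: "\<And>i. A i \<in> sets R" using Union(1) sets_borel S by auto
    have a1: "appr R (\<Union>i. A i)"
      unfolding appr_def
    proof (intro allI impI)
      fix e :: real assume e: "e > 0"
      define B where "B n = \<Union>(A ` {..<n})" for n
      have "incseq B" unfolding B_def incseq_def by (intro allI impI UN_mono) auto
      moreover have "range B \<subseteq> sets R" unfolding B_def using Ab by auto
      ultimately have "(\<lambda>n. measure R (B n)) \<longlonglongrightarrow> measure R (\<Union>n. B n)"
        by (intro finite_Lim_measure_incseq) auto
      moreover have UB: "(\<Union>n. B n) = (\<Union>i. A i)" unfolding B_def by auto
      ultimately have "(\<lambda>n. measure R (B n)) \<longlonglongrightarrow> measure R (\<Union>i. A i)" by simp
      then obtain N where N: "\<bar>measure R (B N) - measure R (\<Union>i. A i)\<bar> < e/2"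
        using e by (metis LIMSEQ_iff half_gt_zero lessThan_iff order_refl real_norm_def)
      have "appr R (\<Union>(A ` {..<N})) \<and> \<Union>(A ` {..<N}) \<in> sets borel"
        using Union(2) Ab S by (intro appr_finite_Union[OF F S]) auto
      then obtain K where K: "compact K" "K \<subseteq> B N" "measure R (B N) < measure R K + e/2"
        unfolding appr_def B_def using e by (meson half_gt_zero)
      have "B N \<subseteq> (\<Union>i. A i)" unfolding B_def by auto
      moreover have "measure R (\<Union>i. A i) < measure R (B N) + e/2" using N by (auto simp only: abs_less_iff)
      ultimately show "\<exists>K. compact K \<and> K \<subseteq> (\<Union>i. A i) \<and> measure R (\<Union>i. A i) < measure R K + e"
        using K by (intro exI[of _ K]) auto
    qed
    have a2: "appr R (- (\<Union>i. A i))"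
      unfolding appr_def
    proof (intro allI impI)
      fix e :: real assume e: "e > 0"
      have "\<forall>i. \<exists>K. compact K \<and> K \<subseteq> - A i \<and> measure R (- A i) < measure R K + e/2 * (1/2)^Suc i"
        using Union(2) e unfolding appr_def by simp
      then obtain K where K: "\<And>i. compact (K i)" "\<And>i. K i \<subseteq> - A i"
        "\<And>i. measure R (- A i) < measure R (K i) + e/2 * (1/2)^Suc i"
        by metis
      define K' where "K' = (\<Inter>i. K i)"
      have cK': "compact K'" unfolding K'_def
        using K(1) by (intro closed_compact_univ[OF cU] closed_INT) (auto intro: compact_imp_closed)
      have Kb: "\<And>i. K i \<in> sets R" using K(1) compact_borel S by auto
      have cAb: "\<And>i. - A i \<in> sets R" using Ab sp by (metis Compl_eq_Diff_UNIV sets.compl_sets)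
      have dif: "\<And>i. measure R (- A i - K i) = measure R (- A i) - measure R (K i)"
        using Kb cAb K(2) by (intro finite_measure_Diff) auto
      have le: "measure R (- A i - K i) \<le> e/2 * (1/2)^Suc i" for i
        using dif[of i] K(3)[of i] by linarith
      have sg: "summable (\<lambda>i. e/2 * (1/2::real)^Suc i)"
        by (intro summable_mult summable_geometric_iff[THEN iffD2] summable_Suc_iff[THEN iffD2]) auto
      have sm: "summable (\<lambda>i. measure R (- A i - K i))"
        by (rule summable_comparison_test'[OF sg, of 0]) (use le in auto)
      have "(\<lambda>i. e/2 * (1/2::real)^Suc i) sums (e/2 * 1)"
        by (intro sums_mult power_half_series)
      then have s1: "(\<Sum>i. e/2 * (1/2::real)^Suc i) = e/2" by (simp add: sums_iff)
      have Ub: "(\<Union>i. - A i - K i) \<in> sets R" using Kb cAb by (intro sets.countable_UN) auto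
      have K'b: "K' \<in> sets R" using compact_borel[OF cK'] S by simp
      have "- (\<Union>i. A i) \<subseteq> K' \<union> (\<Union>i. - A i - K i)" unfolding K'_def by auto
      then have "measure R (- (\<Union>i. A i)) \<le> measure R (K' \<union> (\<Union>i. - A i - K i))"
        using Ub K'b by (intro finite_measure_mono) auto
      also have "\<dots> \<le> measure R K' + measure R (\<Union>i. - A i - K i)"
        using Ub K'b by (intro measure_subadditive) (auto simp: emeasure_finite)
      also have "measure R (\<Union>i. - A i - K i) \<le> (\<Sum>i. measure R (- A i - K i))"
        using Kb cAb sm by (intro finite_measure_subadditive_countably) auto
      also have "\<dots> \<le> (\<Sum>i. e/2 * (1/2::real)^Suc i)"
        using le sm sg by (intro suminf_le) auto
      finally have "measure R (- (\<Union>i. A i)) < measure R K' + e" using s1 e by linarith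
      moreover have "K' \<subseteq> - (\<Union>i. A i)" unfolding K'_def using K(2) by blast
      ultimately show "\<exists>K. compact K \<and> K \<subseteq> - (\<Union>i. A i) \<and> measure R (- (\<Union>i. A i)) < measure R K + e"
        using cK' by blast
    qed
    show ?case using a1 a2 by simp
  qed
  then show ?thesis by simp
qed

lemma regular_from_open:
  fixes R :: "'c::t2_space measure"
  assumes P: "prob_space R" and S: "sets R = sets borel"
    and cU: "compact (UNIV :: 'c set)"
    and op: "\<And>W. open W \<Longrightarrow> appr R W"
  shows "regular_borel_prob R"
proof (rule rbp_intro[OF P S])
  interpret prob_space R by (rule P)
  fix A :: "'c set" and e :: real assume "A \<in> sets borel" "e > 0"
  then show "\<exists>K. compact K \<and> K \<subseteq> A \<and> measure R A < measure R K + e"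
    using appr_all[OF finite_measure_axioms S cU op] unfolding appr_def by blast
qed

lemma rbp_appr: "regular_borel_prob R \<Longrightarrow> A \<in> sets borel \<Longrightarrow> appr R (A :: 'c::t2_space set)"
  unfolding appr_def using rbp_inner by blast

lemma agree_sigma:
  fixes M N :: "'c measure"
  assumes FM: "finite_measure M" and FN: "finite_measure N"
    and sM: "space M = UNIV" and sN: "space N = UNIV"
    and IS: "Int_stable E" and U: "UNIV \<in> E"
    and SM: "sigma_sets UNIV E \<subseteq> sets M" and SN: "sigma_sets UNIV E \<subseteq> sets N"
    and eq: "\<And>X. X \<in> E \<Longrightarrow> emeasure M X = emeasure N X"
    and D: "D \<in> sigma_sets UNIV E"
  shows "emeasure M D = emeasure N D"
proof -
  have cl: "E \<subseteq> Pow UNIV" by auto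
  from IS cl D show ?thesis
proof (induction rule: sigma_sets_induct_disjoint)
  case (basic A) then show ?case using eq by simp
next
  case empty then show ?case by simp
next
  case (compl A)
  have AM: "A \<in> sets M" and AN: "A \<in> sets N" using compl SM SN by auto
  have "emeasure M (UNIV - A) = emeasure M UNIV - emeasure M A"
    using emeasure_compl[OF AM] finite_measure.emeasure_finite[OF FM, of A] sM by simp
  also have "\<dots> = emeasure N UNIV - emeasure N A" using compl.IH eq[OF U] by simp
  also have "\<dots> = emeasure N (UNIV - A)"
    using emeasure_compl[OF AN] finite_measure.emeasure_finite[OF FN, of A] sN by simp
  finally show ?case .
next
  case (union A)
  then show ?case using SM SN by (subst (1 2) suminf_emeasure[symmetric]) auto
qed
qed

lemma compact_prod_cover:
  fixes K W :: "('c::topological_space \<times> 'd::topological_space) set"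
  assumes K: "compact K" and W: "open W" and KW: "K \<subseteq> W"
  shows "\<exists>T. finite T \<and> (\<forall>p\<in>T. open (fst p) \<and> open (snd p)) \<and>
             K \<subseteq> \<Union>((\<lambda>p. fst p \<times> snd p) ` T) \<and> \<Union>((\<lambda>p. fst p \<times> snd p) ` T) \<subseteq> W"
proof -
  have "\<forall>z\<in>K. \<exists>p. open (fst p) \<and> open (snd p) \<and> z \<in> fst p \<times> snd p \<and> fst p \<times> snd p \<subseteq> W"
  proof
    fix z assume "z \<in> K"
    then have "z \<in> W" using KW by auto
    then show "\<exists>p. open (fst p) \<and> open (snd p) \<and> z \<in> fst p \<times> snd p \<and> fst p \<times> snd p \<subseteq> W"
      by (rule open_prod_elim[OF W]) (metis fst_conv snd_conv)
  qed
  then obtain p where p: "\<And>z. z \<in> K \<Longrightarrow> open (fst (p z)) \<and> open (snd (p z)) \<and> z \<in> fst (p z) \<times> snd (p z) \<and> fst (p z) \<times> snd (p z) \<subseteq> W"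
    by metis
  have o: "\<And>z. z \<in> K \<Longrightarrow> open (fst (p z) \<times> snd (p z))" using p by (simp add: open_Times)
  have c: "K \<subseteq> (\<Union>z\<in>K. fst (p z) \<times> snd (p z))" using p by blast
  obtain C where C: "C \<subseteq> K" "finite C" "K \<subseteq> (\<Union>z\<in>C. fst (p z) \<times> snd (p z))"
    by (rule compactE_image[OF K o c]) blast
  have sub: "fst (p z) \<times> snd (p z) \<subseteq> W" if "z \<in> C" for z
    using p[of z] C(1) that by blast
  have op2: "open (fst (p z)) \<and> open (snd (p z))" if "z \<in> C" for z
    using p[of z] C(1) that by blast
  show ?thesis
  proof (intro exI[of _ "p ` C"] conjI)
    show "finite (p ` C)" using C(2) by simp
    show "\<forall>q\<in>p ` C. open (fst q) \<and> open (snd q)" using op2 by blast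
    show "K \<subseteq> \<Union>((\<lambda>q. fst q \<times> snd q) ` p ` C)" using C(3) by (simp add: image_image)
    show "\<Union>((\<lambda>q. fst q \<times> snd q) ` p ` C) \<subseteq> W" using sub by (simp add: image_image UN_subset_iff)
  qed
qed

lemma rect_sigma_borel:
  "sigma_sets UNIV {A \<times> B | A B. A \<in> sets borel \<and> B \<in> sets borel} \<subseteq> sets (borel :: ('c::topological_space \<times> 'd::topological_space) measure)"
  by (rule borel_sigma_sets_subset) (blast intro: borel_Times)

lemma rect_Int_stable: "Int_stable {A \<times> B | A B. A \<in> sets borel \<and> B \<in> sets borel}"
  unfolding Int_stable_def by (auto simp: Times_Int_Times) (metis Times_Int_Times sets.Int)

lemma rbp_unique:
  fixes R1 R2 :: "('c::t2_space \<times> 'd::t2_space) measure"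
  assumes R1: "regular_borel_prob R1" and R2: "regular_borel_prob R2"
    and eq: "\<And>A B. A \<in> sets borel \<Longrightarrow> B \<in> sets borel \<Longrightarrow> emeasure R1 (A \<times> B) = emeasure R2 (A \<times> B)"
  shows "R1 = R2"
proof -
  interpret P1: prob_space R1 using rbp_basic[OF R1] by simp
  interpret P2: prob_space R2 using rbp_basic[OF R2] by simp
  have s1: "sets R1 = sets borel" "space R1 = UNIV" and s2: "sets R2 = sets borel" "space R2 = UNIV"
    by (simp_all add: rbp_basic[OF R1] rbp_basic[OF R2])
  let ?E = "{A \<times> B | A B. A \<in> sets (borel :: 'c measure) \<and> B \<in> sets (borel :: 'd measure)}"
  have UE: "(UNIV::('c \<times> 'd) set) \<in> ?E"
    by (rule CollectI, rule exI[of _ UNIV], rule exI[of _ UNIV]) auto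
  have sig: "emeasure R1 D = emeasure R2 D" if "D \<in> sigma_sets UNIV ?E" for D
  proof (rule agree_sigma[OF P1.finite_measure_axioms P2.finite_measure_axioms s1(2) s2(2) rect_Int_stable UE])
    show "sigma_sets UNIV ?E \<subseteq> sets R1" using rect_sigma_borel s1(1) by simp
    show "sigma_sets UNIV ?E \<subseteq> sets R2" using rect_sigma_borel s2(1) by simp
    fix X assume "X \<in> ?E"
    then obtain A B where "X = A \<times> B" "A \<in> sets borel" "B \<in> sets borel" by blast
    then show "emeasure R1 X = emeasure R2 X" using eq by simp
  qed (rule that)
  interpret S: sigma_algebra UNIV "sigma_sets UNIV ?E"
    by (rule sigma_algebra_sigma_sets) auto
  have le: "measure Ra W \<le> measure Rb W"
    if ab: "(Ra = R1 \<and> Rb = R2) \<or> (Ra = R2 \<and> Rb = R1)" and W: "open W" for Ra Rb W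
  proof (rule field_le_epsilon)
    fix e :: real assume e: "e > 0"
    have Ra: "regular_borel_prob Ra" and Rb: "regular_borel_prob Rb" using ab R1 R2 by auto
    interpret Pa: prob_space Ra using rbp_basic[OF Ra] by simp
    interpret Pb: prob_space Rb using rbp_basic[OF Rb] by simp
    have sa: "sets Ra = sets borel" and sb: "sets Rb = sets borel" by (simp_all add: rbp_basic[OF Ra] rbp_basic[OF Rb])
    have eqab: "\<And>D. D \<in> sigma_sets UNIV ?E \<Longrightarrow> measure Ra D = measure Rb D"
      using ab sig by (auto simp: measure_def)
    obtain K where K: "compact K" "K \<subseteq> W" "measure Ra W < measure Ra K + e"
      using rbp_inner[OF Ra _ e, of W] W by auto
    obtain T where T: "finite T" "\<forall>p\<in>T. open (fst p) \<and> open (snd p)"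
      "K \<subseteq> \<Union>((\<lambda>p. fst p \<times> snd p) ` T)" "\<Union>((\<lambda>p. fst p \<times> snd p) ` T) \<subseteq> W"
      using compact_prod_cover[OF K(1) W K(2)] by blast
    let ?F = "\<Union>((\<lambda>p. fst p \<times> snd p) ` T)"
    have ab_in: "a \<times> b \<in> sigma_sets UNIV ?E" if "open a" "open b" for a b
      by (rule sigma_sets.Basic) (use that in \<open>auto intro: borel_open\<close>)
    have FE: "?F \<in> sigma_sets UNIV ?E"
      by (rule S.finite_UN) (use T(1,2) ab_in in auto)
    have Fb: "?F \<in> sets borel" using FE rect_sigma_borel by blast
    have "measure Ra K \<le> measure Ra ?F"
      by (rule Pa.finite_measure_mono[OF T(3)]) (simp add: sa Fb)
    also have "\<dots> = measure Rb ?F" using eqab[OF FE] .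
    also have "\<dots> \<le> measure Rb W"
      by (rule Pb.finite_measure_mono[OF T(4)]) (simp add: sb W borel_open)
    finally show "measure Ra W \<le> measure Rb W + e" using K(3) by linarith
  qed
  have op: "emeasure R1 W = emeasure R2 W" if "open W" for W
    using le[of R1 R2 W] le[of R2 R1 W] that
    by (simp add: P1.emeasure_eq_measure P2.emeasure_eq_measure)
  have "emeasure R1 D = emeasure R2 D" if "D \<in> sets borel" for D
  proof (rule agree_sigma[OF P1.finite_measure_axioms P2.finite_measure_axioms s1(2) s2(2)])
    show "Int_stable {S. open S}" by (auto simp: Int_stable_def)
    show "UNIV \<in> {S. open S}" by simp
    show "sigma_sets UNIV {S. open S} \<subseteq> sets R1" by (simp add: s1 sets_borel)
    show "sigma_sets UNIV {S. open S} \<subseteq> sets R2" by (simp add: s2 sets_borel)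
    show "D \<in> sigma_sets UNIV {S. open S}" using that by (simp add: sets_borel)
  qed (use op in simp)
  then show ?thesis using s1 s2 by (intro measure_eqI) auto
qed

lemma slice_borel:
  fixes D :: "('c::topological_space \<times> 'd::topological_space) set"
  assumes D: "D \<in> sets borel"
  shows "Pair x -` D \<in> sets borel"
proof -
  have "(\<lambda>y. (x, y)) \<in> borel_measurable borel"
    by (intro borel_measurable_continuous_onI continuous_intros)
  from measurable_sets_borel[OF this D] show ?thesis by (simp add: vimage_def)
qed

lemma slice_usc:
  fixes \<nu> :: "'b::t2_space measure" and D :: "('a::t2_space \<times> 'b) set"
  assumes N: "regular_borel_prob \<nu>" and cU: "compact (UNIV :: ('a \<times> 'b) set)" and D: "closed D"
  shows "(\<lambda>x. measure \<nu> (Pair x -` D)) \<in> borel_measurable borel"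
proof -
  interpret prob_space \<nu> using rbp_basic[OF N] by simp
  have sN: "sets \<nu> = sets borel" using rbp_basic[OF N] by simp
  have "open {w. measure \<nu> (Pair w -` D) < a}" for a
  proof (subst open_subopen, intro ballI)
    fix x assume "x \<in> {w. measure \<nu> (Pair w -` D) < a}"
    then have lt: "measure \<nu> (Pair x -` D) < a" by simp
    have Db: "Pair x -` D \<in> sets borel" using slice_borel D borel_closed by blast
    obtain V where V: "open V" "Pair x -` D \<subseteq> V"
      "measure \<nu> V < measure \<nu> (Pair x -` D) + (a - measure \<nu> (Pair x -` D))"
      using rbp_outer[OF N Db, of "a - measure \<nu> (Pair x -` D)"] lt by auto
    let ?C = "D \<inter> (UNIV \<times> (- V))"
    have "closed ?C" using D V(1) by (intro closed_Int closed_Times) auto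
    then have "compact ?C" using closed_compact_univ[OF cU] by blast
    then have "compact (fst ` ?C)" by (intro compact_continuous_image continuous_intros)
    then have oT: "open (- (fst ` ?C))" by (simp add: compact_imp_closed open_Compl)
    have xT: "x \<in> - (fst ` ?C)" using V(2) by force
    have "- (fst ` ?C) \<subseteq> {w. measure \<nu> (Pair w -` D) < a}"
    proof
      fix x' assume "x' \<in> - (fst ` ?C)"
      then have "Pair x' -` D \<subseteq> V" by force
      then have "measure \<nu> (Pair x' -` D) \<le> measure \<nu> V"
        using V(1) sN by (intro finite_measure_mono) (auto intro: borel_open)
      then show "x' \<in> {w. measure \<nu> (Pair w -` D) < a}" using V(3) by simp
    qed
    then show "\<exists>T. open T \<and> x \<in> T \<and> T \<subseteq> {w. measure \<nu> (Pair w -` D) < a}"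
      using oT xT by blast
  qed
  then show ?thesis
    by (subst borel_measurable_iff_less) (auto intro: borel_open)
qed

lemma slice_meas:
  fixes \<nu> :: "'b::t2_space measure" and D :: "('a::t2_space \<times> 'b) set"
  assumes N: "regular_borel_prob \<nu>" and cU: "compact (UNIV :: ('a \<times> 'b) set)" and D: "D \<in> sets borel"
  shows "(\<lambda>x. emeasure \<nu> (Pair x -` D)) \<in> borel_measurable borel"
proof -
  interpret prob_space \<nu> using rbp_basic[OF N] by simp
  have sN: "sets \<nu> = sets borel" "space \<nu> = UNIV" using rbp_basic[OF N] by auto
  have "sets (borel :: ('a \<times> 'b) measure) = sigma_sets UNIV (Collect closed)"
    by (subst borel_eq_closed) (rule sets_measure_of, simp)
  then have D': "D \<in> sigma_sets UNIV (Collect closed)" using D by simp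
  have IS: "Int_stable (Collect closed :: ('a \<times> 'b) set set)"
    by (auto simp: Int_stable_def)
  have cl: "Collect closed \<subseteq> Pow (UNIV :: ('a \<times> 'b) set)" by auto
  from IS cl D' show ?thesis
  proof (induction rule: sigma_sets_induct_disjoint)
    case (basic A)
    then have "closed A" by simp
    have "(\<lambda>x. ennreal (measure \<nu> (Pair x -` A))) \<in> borel_measurable borel"
      by (rule measurable_compose[OF slice_usc[OF N cU \<open>closed A\<close>] measurable_ennreal])
    then show ?case by (simp add: emeasure_eq_measure)
  next
    case empty
    then show ?case by simp
  next
    case (compl A)
    have Ab: "A \<in> sets borel" using compl(1) \<open>sets borel = sigma_sets UNIV (Collect closed)\<close> by simp
    have eq: "emeasure \<nu> (Pair x -` (UNIV - A)) = 1 - emeasure \<nu> (Pair x -` A)" for x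
    proof -
      have "Pair x -` (UNIV - A) = space \<nu> - Pair x -` A" using sN by auto
      moreover have "Pair x -` A \<in> sets \<nu>" using slice_borel[OF Ab] sN by simp
      ultimately show ?thesis using emeasure_compl[of "Pair x -` A" \<nu>] emeasure_space_1 by simp
    qed
    show ?case unfolding eq by (intro borel_measurable_minus_ennreal compl(2)) simp
  next
    case (union A)
    have Ab: "A i \<in> sets borel" for i using union(2) \<open>sets borel = sigma_sets UNIV (Collect closed)\<close> by auto
    have eq: "emeasure \<nu> (Pair x -` (\<Union>i. A i)) = (\<Sum>i. emeasure \<nu> (Pair x -` A i))" for x
    proof -
      have "Pair x -` (\<Union>i. A i) = (\<Union>i. Pair x -` A i)" by auto
      moreover have "disjoint_family (\<lambda>i. Pair x -` A i)"
        using union(1) unfolding disjoint_family_on_def by auto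
      moreover have "range (\<lambda>i. Pair x -` A i) \<subseteq> sets \<nu>" using slice_borel[OF Ab] sN by auto
      ultimately show ?thesis by (simp add: suminf_emeasure)
    qed
    show ?case unfolding eq by (rule borel_measurable_suminf_order) (rule union(3))
  qed
qed

definition rprod :: "'a::topological_space measure \<Rightarrow> 'b::topological_space measure \<Rightarrow> ('a \<times> 'b) measure" where
  "rprod \<mu> \<nu> = \<mu> \<bind> (\<lambda>x. distr \<nu> borel (Pair x))"

locale rp =
  fixes \<mu> :: "'a::t2_space measure" and \<nu> :: "'b::t2_space measure"
  assumes M: "regular_borel_prob \<mu>" and N: "regular_borel_prob \<nu>"
    and cA: "compact (UNIV :: 'a set)" and cB: "compact (UNIV :: 'b set)"
begin

lemma cU: "compact (UNIV :: ('a \<times> 'b) set)"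
  using compact_Times[OF cA cB] by simp

lemma sM: "sets \<mu> = sets borel" "space \<mu> = UNIV" using rbp_basic[OF M] by auto
lemma sN: "sets \<nu> = sets borel" "space \<nu> = UNIV" using rbp_basic[OF N] by auto

sublocale PM: prob_space \<mu> using rbp_basic[OF M] by simp
sublocale PN: prob_space \<nu> using rbp_basic[OF N] by simp

lemma Pair_meas: "Pair (x::'a) \<in> measurable \<nu> (borel :: ('a \<times> 'b) measure)"
proof -
  have "(\<lambda>y. (x, y)) \<in> borel_measurable borel"
    by (intro borel_measurable_continuous_onI continuous_intros)
  moreover have "measurable \<nu> (borel::('a \<times> 'b) measure) = measurable borel borel"
    by (rule measurable_cong_sets[OF sN(1) refl])
  ultimately show ?thesis by simp
qed

lemma kern: "(\<lambda>x. distr \<nu> borel (Pair x)) \<in> measurable \<mu> (subprob_algebra borel)"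
proof (rule measurable_subprob_algebra)
  fix a :: 'a
  show "subprob_space (distr \<nu> borel (Pair a))"
    by (intro prob_space_imp_subprob_space PN.prob_space_distr Pair_meas)
  show "sets (distr \<nu> borel (Pair a)) = sets borel" by simp
next
  fix A :: "('a \<times> 'b) set" assume A: "A \<in> sets borel"
  have "(\<lambda>x. emeasure \<nu> (Pair x -` A)) \<in> borel_measurable \<mu>"
    using slice_meas[OF N cU A] measurable_cong_sets[OF sM(1) refl] by blast
  moreover have "emeasure (distr \<nu> borel (Pair a)) A = emeasure \<nu> (Pair a -` A)" for a
    using emeasure_distr[OF Pair_meas A] sN(2) by simp
  ultimately show "(\<lambda>a. emeasure (distr \<nu> borel (Pair a)) A) \<in> borel_measurable \<mu>"
    by simp
qed

lemma sets_R: "sets (rprod \<mu> \<nu>) = sets borel"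
  unfolding rprod_def by (subst sets_bind[where N=borel]) (auto simp: sM)

lemma space_R: "space (rprod \<mu> \<nu>) = UNIV"
  using sets_eq_imp_space_eq[OF sets_R] by simp

lemma emeasure_R:
  assumes D: "D \<in> sets borel"
  shows "emeasure (rprod \<mu> \<nu>) D = (\<integral>\<^sup>+x. emeasure \<nu> (Pair x -` D) \<partial>\<mu>)"
proof -
  have "emeasure (rprod \<mu> \<nu>) D = (\<integral>\<^sup>+x. emeasure (distr \<nu> borel (Pair x)) D \<partial>\<mu>)"
    unfolding rprod_def by (rule emeasure_bind[OF _ kern D]) (simp add: sM(2))
  also have "\<dots> = (\<integral>\<^sup>+x. emeasure \<nu> (Pair x -` D) \<partial>\<mu>)"
    using D emeasure_distr[OF Pair_meas D] sN(2) by simp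
  finally show ?thesis .
qed

lemma prob_R: "prob_space (rprod \<mu> \<nu>)"
proof (rule prob_spaceI)
  have "emeasure (rprod \<mu> \<nu>) UNIV = (\<integral>\<^sup>+x. emeasure \<nu> (Pair x -` UNIV) \<partial>\<mu>)"
    by (rule emeasure_R) simp
  also have "\<dots> = (\<integral>\<^sup>+x. 1 \<partial>\<mu>)" using PN.emeasure_space_1 sN(2) by simp
  also have "\<dots> = 1" using PM.emeasure_space_1 sM(2) by simp
  finally show "emeasure (rprod \<mu> \<nu>) (space (rprod \<mu> \<nu>)) = 1" using space_R by simp
qed

sublocale PR: prob_space "rprod \<mu> \<nu>" by (rule prob_R)

lemma emeasure_R_rect:
  assumes A: "A \<in> sets borel" and B: "B \<in> sets borel"
  shows "emeasure (rprod \<mu> \<nu>) (A \<times> B) = emeasure \<mu> A * emeasure \<nu> B"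
proof -
  have "emeasure (rprod \<mu> \<nu>) (A \<times> B) = (\<integral>\<^sup>+x. emeasure \<nu> B * indicator A x \<partial>\<mu>)"
  proof -
    have "emeasure \<nu> (Pair x -` (A \<times> B)) = emeasure \<nu> B * indicator A x" for x
    proof -
      have "Pair x -` (A \<times> B) = (if x \<in> A then B else {})" by auto
      then show ?thesis by (simp add: indicator_def)
    qed
    then show ?thesis using emeasure_R[OF borel_Times[OF A B]] by simp
  qed
  also have "\<dots> = emeasure \<nu> B * emeasure \<mu> A"
    using A sM by (intro nn_integral_cmult_indicator) auto
  finally show ?thesis by (simp add: mult.commute)
qed

lemma measure_R_rect:
  assumes A: "A \<in> sets borel" and B: "B \<in> sets borel"
  shows "measure (rprod \<mu> \<nu>) (A \<times> B) = measure \<mu> A * measure \<nu> B"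
  using emeasure_R_rect[OF A B]
  by (simp add: PR.emeasure_eq_measure PM.emeasure_eq_measure PN.emeasure_eq_measure ennreal_mult''[symmetric])

lemma g_meas:
  assumes D: "D \<in> sets borel"
  shows "(\<lambda>x. measure \<nu> (Pair x -` D)) \<in> borel_measurable \<mu>"
proof -
  have "(\<lambda>x. enn2real (emeasure \<nu> (Pair x -` D))) \<in> borel_measurable borel"
    by (rule borel_measurable_enn2real[OF slice_meas[OF N cU D]])
  moreover have "(borel_measurable \<mu> :: ('a \<Rightarrow> real) set) = borel_measurable borel"
    by (rule measurable_cong_sets[OF sM(1) refl])
  ultimately show ?thesis by (simp add: measure_def)
qed

lemma g_int:
  assumes D: "D \<in> sets borel"
  shows "integrable \<mu> (\<lambda>x. measure \<nu> (Pair x -` D))"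
  by (rule PM.integrable_const_bound[where B=1]) (auto intro: g_meas[OF D])

lemma measure_R:
  assumes D: "D \<in> sets borel"
  shows "measure (rprod \<mu> \<nu>) D = (\<integral>x. measure \<nu> (Pair x -` D) \<partial>\<mu>)"
proof -
  have "emeasure (rprod \<mu> \<nu>) D = (\<integral>\<^sup>+x. ennreal (measure \<nu> (Pair x -` D)) \<partial>\<mu>)"
    using emeasure_R[OF D] by (simp add: PN.emeasure_eq_measure)
  also have "\<dots> = ennreal (\<integral>x. measure \<nu> (Pair x -` D) \<partial>\<mu>)"
    by (intro nn_integral_eq_integral g_int[OF D]) auto
  finally show ?thesis
    by (simp add: PR.emeasure_eq_measure integral_nonneg_AE)
qed

end

lemma sum_ind_card:
  assumes "finite S"
  shows "(\<Sum>j\<in>S. indicator (Ov j) x :: real) = real (card {j\<in>S. x \<in> Ov j})"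
proof -
  have "(\<Sum>j\<in>S. indicator (Ov j) x :: real) = (\<Sum>j\<in>S. if x \<in> Ov j then 1 else 0)"
    by (rule sum.cong) (auto simp: indicator_def)
  also have "\<dots> = (\<Sum>j\<in>{j\<in>S. x \<in> Ov j}. 1)"
    using assms by (rule sum.inter_filter[symmetric])
  also have "\<dots> = real (card {j\<in>S. x \<in> Ov j})" by simp
  finally show ?thesis .
qed

lemma count1:
  fixes m :: nat and \<delta> y :: real
  assumes m: "0 < m" and md: "real m * \<delta> = 1" and d: "0 < \<delta>" and y: "0 \<le> y" "y \<le> 1"
  shows "y \<le> \<delta> * (1 + real (card {j\<in>{1..m}. real j * \<delta> < y}))"
proof (rule ccontr)
  define k where "k = card {j\<in>{1..m}. real j * \<delta> < y}"
  assume "\<not> y \<le> \<delta> * (1 + real (card {j\<in>{1..m}. real j * \<delta> < y}))"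
  then have lt: "\<delta> * (1 + real k) < y" unfolding k_def by simp
  have km: "k + 1 < m + 1"
  proof -
    have "real (k + 1) * \<delta> < real m * \<delta>" using lt y md by (simp add: algebra_simps)
    then have "real (k + 1) < real m" using d by simp
    then show ?thesis by simp
  qed
  have "{1..k+1} \<subseteq> {j\<in>{1..m}. real j * \<delta> < y}"
  proof
    fix j assume j: "j \<in> {1..k+1}"
    then have "real j * \<delta> \<le> real (k+1) * \<delta>" using d by (intro mult_right_mono) auto
    also have "\<dots> < y" using lt by (simp add: algebra_simps)
    finally show "j \<in> {j\<in>{1..m}. real j * \<delta> < y}" using j km by auto
  qed
  then have "card {1..k+1} \<le> k" unfolding k_def by (intro card_mono) auto
  then show False by simp
qed

lemma count2:
  fixes m :: nat and \<delta> v :: real and K :: "nat \<Rightarrow> 'x set"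
  assumes d: "0 < \<delta>" and v: "0 \<le> v"
    and h: "\<And>j. j \<in> {1..m} \<Longrightarrow> x \<in> K j \<Longrightarrow> real j * \<delta> < v"
  shows "\<delta> * real (card {j\<in>{1..m}. x \<in> K j}) \<le> v"
proof (cases "{j\<in>{1..m}. x \<in> K j} = {}")
  case True
  then show ?thesis using v by (simp only: True card.empty of_nat_0 mult_zero_right)
next
  case False
  define J where "J = {j\<in>{1..m}. x \<in> K j}"
  have fJ: "finite J" unfolding J_def by simp
  define k where "k = Max J"
  have kJ: "k \<in> J" unfolding k_def using False fJ J_def by (intro Max_in) auto
  have "J \<subseteq> {1..k}" unfolding k_def using fJ J_def by (auto intro: Max_ge)
  then have "card J \<le> k" using card_mono[of "{1..k}" J] by simp
  then have "\<delta> * real (card J) \<le> \<delta> * real k" using d by simp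
  also have "\<dots> < v" using h kJ unfolding J_def by (simp add: mult.commute)
  finally show ?thesis unfolding J_def by simp
qed

context rp
begin

lemma rect_appr:
  assumes A: "A \<in> sets borel" and B: "B \<in> sets borel"
  shows "appr (rprod \<mu> \<nu>) (A \<times> B)"
  unfolding appr_def
proof (intro allI impI)
  fix e :: real assume e: "e > 0"
  obtain KA where KA: "compact KA" "KA \<subseteq> A" "measure \<mu> A < measure \<mu> KA + e/2"
    using rbp_inner[OF M A, of "e/2"] e by auto
  obtain KB where KB: "compact KB" "KB \<subseteq> B" "measure \<nu> B < measure \<nu> KB + e/2"
    using rbp_inner[OF N B, of "e/2"] e by auto
  have KAb: "KA \<in> sets borel" and KBb: "KB \<in> sets borel" using KA KB compact_borel by auto
  have m1: "measure (rprod \<mu> \<nu>) (A \<times> B) = measure \<mu> A * measure \<nu> B" by (rule measure_R_rect[OF A B])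
  have m2: "measure (rprod \<mu> \<nu>) (KA \<times> KB) = measure \<mu> KA * measure \<nu> KB" by (rule measure_R_rect[OF KAb KBb])
  have b1: "measure \<mu> KA \<le> measure \<mu> A" using KA(2) A sM by (intro PM.finite_measure_mono) auto
  have b2: "measure \<nu> KB \<le> measure \<nu> B" using KB(2) B sN by (intro PN.finite_measure_mono) auto
  have "(measure \<mu> A - measure \<mu> KA) * measure \<nu> B \<le> measure \<mu> A - measure \<mu> KA"
    using b1 by (intro mult_right_le_one_le) (auto simp: PN.prob_le_1)
  moreover have "measure \<mu> KA * (measure \<nu> B - measure \<nu> KB) \<le> measure \<nu> B - measure \<nu> KB"
    using b2 by (intro mult_left_le_one_le) (auto simp: PM.prob_le_1)
  ultimately have "measure \<mu> A * measure \<nu> B < measure \<mu> KA * measure \<nu> KB + e"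
    using KA(3) KB(3) by (simp add: algebra_simps)
  then show "\<exists>K. compact K \<and> K \<subseteq> A \<times> B \<and> measure (rprod \<mu> \<nu>) (A \<times> B) < measure (rprod \<mu> \<nu>) K + e"
    using m1 m2 KA KB by (intro exI[of _ "KA \<times> KB"]) (auto intro: compact_Times)
qed

lemma F_appr:
  assumes T: "finite T" "\<forall>p\<in>T. fst p \<in> sets borel \<and> snd p \<in> sets borel"
  shows "appr (rprod \<mu> \<nu>) (\<Union>((\<lambda>p. fst p \<times> snd p) ` T)) \<and> \<Union>((\<lambda>p. fst p \<times> snd p) ` T) \<in> sets borel"
  using T by (intro appr_finite_Union[OF PR.finite_measure_axioms sets_R])
    (auto intro!: rect_appr borel_Times)

lemma cover_level:
  assumes W: "open W" and K: "compact K" and t: "\<And>x. x \<in> K \<Longrightarrow> t < measure \<nu> (Pair x -` W)"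
  shows "\<exists>T. finite T \<and> (\<forall>p\<in>T. fst p \<in> sets borel \<and> snd p \<in> sets borel) \<and>
     \<Union>((\<lambda>p. fst p \<times> snd p) ` T) \<subseteq> W \<and>
     (\<forall>x\<in>K. t < measure \<nu> (Pair x -` \<Union>((\<lambda>p. fst p \<times> snd p) ` T)))"
proof -
  have "\<exists>p. open (fst p) \<and> x \<in> fst p \<and> compact (snd p) \<and> fst p \<times> snd p \<subseteq> W \<and> t < measure \<nu> (snd p)"
    if x: "x \<in> K" for x
  proof -
    have Wx: "Pair x -` W \<in> sets borel" using slice_borel borel_open W by blast
    have pos: "0 < measure \<nu> (Pair x -` W) - t" using t[OF x] by simp
    obtain L where L: "compact L" "L \<subseteq> Pair x -` W"
      "measure \<nu> (Pair x -` W) < measure \<nu> L + (measure \<nu> (Pair x -` W) - t)"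
      using rbp_inner[OF N Wx pos] by blast
    have "{x} \<times> L \<subseteq> W" using L(2) by auto
    from Elementary_Topology.tube_lemma[OF L(1) W this] obtain X0 where X0: "x \<in> X0" "open X0" "X0 \<times> L \<subseteq> W" by blast
    have "t < measure \<nu> L" using L(3) by simp
    then show ?thesis using L X0 by (intro exI[of _ "(X0, L)"]) auto
  qed
  then obtain p where p: "\<And>x. x \<in> K \<Longrightarrow> open (fst (p x)) \<and> x \<in> fst (p x) \<and> compact (snd (p x)) \<and>
      fst (p x) \<times> snd (p x) \<subseteq> W \<and> t < measure \<nu> (snd (p x))"
    by metis
  have o: "\<And>x. x \<in> K \<Longrightarrow> open (fst (p x))" using p by blast
  have c: "K \<subseteq> (\<Union>x\<in>K. fst (p x))" using p by blast
  obtain C where C: "C \<subseteq> K" "finite C" "K \<subseteq> (\<Union>x\<in>C. fst (p x))"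
    by (rule compactE_image[OF K o c]) blast
  have pb: "fst q \<in> sets borel \<and> snd q \<in> sets borel" if qC: "q \<in> p ` C" for q
  proof -
    obtain z where z: "z \<in> C" "q = p z" using qC by blast
    then have "open (fst q)" "compact (snd q)" using p[of z] C(1) by auto
    then show ?thesis using borel_open compact_borel by blast
  qed
  have sub: "fst (p z) \<times> snd (p z) \<subseteq> W" if "z \<in> C" for z using p[of z] C(1) that by blast
  have Fb: "\<Union>((\<lambda>q. fst q \<times> snd q) ` p ` C) \<in> sets borel"
    by (rule sets.finite_UN) (use C(2) pb in \<open>auto intro: borel_Times\<close>)
  show ?thesis
  proof (intro exI[of _ "p ` C"] conjI ballI)
    show "finite (p ` C)" using C(2) by simp
    show "fst q \<in> sets borel" "snd q \<in> sets borel" if "q \<in> p ` C" for q using pb[OF that] by auto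
    show "\<Union>((\<lambda>q. fst q \<times> snd q) ` p ` C) \<subseteq> W" using sub by (simp add: image_image UN_subset_iff)
    fix x assume x: "x \<in> K"
    then obtain z where z: "z \<in> C" "x \<in> fst (p z)" using C(3) by blast
    have "snd (p z) \<subseteq> Pair x -` \<Union>((\<lambda>q. fst q \<times> snd q) ` p ` C)" using z by auto
    then have "measure \<nu> (snd (p z)) \<le> measure \<nu> (Pair x -` \<Union>((\<lambda>q. fst q \<times> snd q) ` p ` C))"
      using slice_borel[OF Fb] sN by (intro PN.finite_measure_mono) auto
    moreover have "t < measure \<nu> (snd (p z))" using p[of z] z C(1) by auto
    ultimately show "t < measure \<nu> (Pair x -` \<Union>((\<lambda>q. fst q \<times> snd q) ` p ` C))" by simp
  qed
qed

end

context rp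
begin

lemma open_appr:
  assumes W: "open W"
  shows "appr (rprod \<mu> \<nu>) W"
  unfolding appr_def
proof (intro allI impI)
  fix e :: real assume e: "e > 0"
  have Wb: "W \<in> sets borel" using W by (rule borel_open)
  define g where "g x = measure \<nu> (Pair x -` W)" for x
  have g0: "0 \<le> g x" and g1: "g x \<le> 1" for x unfolding g_def by (auto simp: PN.prob_le_1)
  have gm: "g \<in> borel_measurable \<mu>" unfolding g_def by (rule g_meas[OF Wb])
  have gi: "integrable \<mu> g" unfolding g_def by (rule g_int[OF Wb])
  obtain m :: nat where m: "0 < m" "inverse (real m) < e/3"
    using ex_inverse_of_nat_less[of "e/3"] e by auto
  define \<delta> where "\<delta> = 1 / real m"
  have d0: "0 < \<delta>" and md: "real m * \<delta> = 1" and de: "\<delta> < e/3"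
    using m unfolding \<delta>_def by (auto simp: field_simps)
  define Ov where "Ov j = {x. real j * \<delta> < g x}" for j :: nat
  have Ob: "Ov j \<in> sets \<mu>" for j
  proof -
    have "{w \<in> space \<mu>. real j * \<delta> < g w} \<in> sets \<mu>"
      using gm unfolding borel_measurable_iff_greater by blast
    then show ?thesis unfolding Ov_def using sM(2) by simp
  qed
  have "\<forall>j. \<exists>K. compact K \<and> K \<subseteq> Ov j \<and> measure \<mu> (Ov j) < measure \<mu> K + e/3"
    using rbp_inner[OF M] Ob sM(1) e by auto
  then obtain K where K: "\<And>j. compact (K j)" "\<And>j. K j \<subseteq> Ov j"
      "\<And>j. measure \<mu> (Ov j) < measure \<mu> (K j) + e/3"
    by metis
  have Kb: "K j \<in> sets \<mu>" for j using compact_borel[OF K(1)] sM(1) by simp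
  define PT where "PT j T \<longleftrightarrow> finite T \<and> (\<forall>p\<in>T. fst p \<in> sets borel \<and> snd p \<in> sets borel) \<and>
     \<Union>((\<lambda>p. fst p \<times> snd p) ` T) \<subseteq> W \<and>
     (\<forall>x\<in>K j. real j * \<delta> < measure \<nu> (Pair x -` \<Union>((\<lambda>p. fst p \<times> snd p) ` T)))"
    for j :: nat and T :: "('a set \<times> 'b set) set"
  have ex: "\<exists>T. PT j T" for j
    unfolding PT_def
    proof (rule cover_level[OF W K(1)])
      fix x assume "x \<in> K j"
      then have "x \<in> Ov j" using K(2) by blast
      then show "real j * \<delta> < measure \<nu> (Pair x -` W)" by (simp add: Ov_def g_def)
    qed
  define T where "T j = (SOME T. PT j T)" for j
  have PTj: "PT j (T j)" for j unfolding T_def by (rule someI_ex[OF ex])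
  have T: "\<And>j. finite (T j)" "\<And>j. \<forall>p\<in>T j. fst p \<in> sets borel \<and> snd p \<in> sets borel"
     "\<And>j. \<Union>((\<lambda>p. fst p \<times> snd p) ` T j) \<subseteq> W"
     "\<And>j. \<forall>x\<in>K j. real j * \<delta> < measure \<nu> (Pair x -` \<Union>((\<lambda>p. fst p \<times> snd p) ` T j))"
    using PTj unfolding PT_def by auto
  define T' where "T' = (\<Union>j\<in>{1..m}. T j)"
  define F where "F = \<Union>((\<lambda>p. fst p \<times> snd p) ` T')"
  have fT': "finite T'" unfolding T'_def using T(1) by auto
  have T'b: "\<forall>p\<in>T'. fst p \<in> sets borel \<and> snd p \<in> sets borel" unfolding T'_def using T(2) by auto
  have FW: "F \<subseteq> W" unfolding F_def T'_def using T(3) by blast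
  have Fa: "appr (rprod \<mu> \<nu>) F" and Fb: "F \<in> sets borel"
    using F_appr[OF fT' T'b] unfolding F_def by auto
  have sub: "Pair x -` \<Union>((\<lambda>p. fst p \<times> snd p) ` T j) \<subseteq> Pair x -` F" if "j \<in> {1..m}" for x j
    unfolding F_def T'_def using that by blast
  define h where "h x = measure \<nu> (Pair x -` F)" for x
  have hi: "integrable \<mu> h" unfolding h_def by (rule g_int[OF Fb])
  have P1: "g x \<le> \<delta> + \<delta> * (\<Sum>j\<in>{1..m}. indicator (Ov j) x)" for x
  proof -
    have "(\<Sum>j\<in>{1..m}. indicator (Ov j) x :: real) = real (card {j\<in>{1..m}. x \<in> Ov j})"
      by (rule sum_ind_card) simp
    also have "{j\<in>{1..m}. x \<in> Ov j} = {j\<in>{1..m}. real j * \<delta> < g x}" unfolding Ov_def by simp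
    finally show ?thesis using count1[OF m(1) md d0 g0 g1, of x] by (simp add: algebra_simps)
  qed
  have P2: "\<delta> * (\<Sum>j\<in>{1..m}. indicator (K j) x) \<le> h x" for x
  proof -
    have "(\<Sum>j\<in>{1..m}. indicator (K j) x :: real) = real (card {j\<in>{1..m}. x \<in> K j})"
      by (rule sum_ind_card) simp
    moreover have "\<delta> * real (card {j\<in>{1..m}. x \<in> K j}) \<le> h x"
    proof (rule count2[OF d0])
      show "0 \<le> h x" unfolding h_def by simp
      fix j assume j: "j \<in> {1..m}" and xK: "x \<in> K j"
      have "real j * \<delta> < measure \<nu> (Pair x -` \<Union>((\<lambda>p. fst p \<times> snd p) ` T j))" using T(4)[of j] xK by blast
      also have "\<dots> \<le> h x" unfolding h_def
        using sub[OF j, of x] slice_borel[OF Fb] sN by (intro PN.finite_measure_mono) auto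
      finally show "real j * \<delta> < h x" .
    qed
    ultimately show ?thesis by simp
  qed
  have indi: "integrable \<mu> (\<lambda>x. indicator A x :: real)" if "A \<in> sets \<mu>" for A
    using that by (intro integrable_real_indicator) (auto simp: PM.emeasure_eq_measure)
  have pU: "measure \<mu> UNIV = 1" using PM.prob_space sM(2) by simp
  have "measure (rprod \<mu> \<nu>) W = (\<integral>x. g x \<partial>\<mu>)" unfolding g_def by (rule measure_R[OF Wb])
  also have "\<dots> \<le> (\<integral>x. \<delta> + \<delta> * (\<Sum>j\<in>{1..m}. indicator (Ov j) x) \<partial>\<mu>)"
    using P1 gi Ob indi by (intro integral_mono) auto
  also have "\<dots> = \<delta> + \<delta> * (\<Sum>j\<in>{1..m}. measure \<mu> (Ov j))"
    using Ob indi sM(2) pU by (simp add: integral_sum integral_add)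
  also have "\<dots> < \<delta> + \<delta> * (\<Sum>j\<in>{1..m}. measure \<mu> (K j) + e/3)"
    using K(3) m(1) d0 by (intro add_strict_left_mono mult_strict_left_mono sum_strict_mono) auto
  also have "\<dots> = \<delta> + \<delta> * (\<Sum>j\<in>{1..m}. measure \<mu> (K j)) + e/3"
    using md by (simp add: sum.distrib algebra_simps)
  also have "\<delta> * (\<Sum>j\<in>{1..m}. measure \<mu> (K j)) = (\<integral>x. \<delta> * (\<Sum>j\<in>{1..m}. indicator (K j) x) \<partial>\<mu>)"
    using Kb indi sM(2) by (simp add: integral_sum)
  also have "\<dots> \<le> (\<integral>x. h x \<partial>\<mu>)"
    using P2 hi Kb indi by (intro integral_mono) auto
  also have "\<dots> = measure (rprod \<mu> \<nu>) F" unfolding h_def by (rule measure_R[OF Fb, symmetric])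
  finally have lt1: "measure (rprod \<mu> \<nu>) W < \<delta> + measure (rprod \<mu> \<nu>) F + e/3" by simp
  obtain C where C: "compact C" "C \<subseteq> F" "measure (rprod \<mu> \<nu>) F < measure (rprod \<mu> \<nu>) C + e/3"
    using Fa e unfolding appr_def by (meson divide_pos_pos zero_less_numeral)
  show "\<exists>K. compact K \<and> K \<subseteq> W \<and> measure (rprod \<mu> \<nu>) W < measure (rprod \<mu> \<nu>) K + e"
    using C FW lt1 de by (intro exI[of _ C]) auto
qed

lemma rprod_regular: "regular_borel_prob (rprod \<mu> \<nu>)"
  by (rule regular_from_open[OF prob_R sets_R cU open_appr])

end

context rp
begin

lemma pair_sets: "sets (\<mu> \<Otimes>\<^sub>M \<nu>) = sigma_sets UNIV {A \<times> B | A B. A \<in> sets borel \<and> B \<in> sets borel}"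
  by (simp add: sets_pair_measure sM sN)

lemma rprod_agree: "\<forall>D\<in>sets (\<mu> \<Otimes>\<^sub>M \<nu>). emeasure (rprod \<mu> \<nu>) D = emeasure (\<mu> \<Otimes>\<^sub>M \<nu>) D"
proof
  fix D assume D: "D \<in> sets (\<mu> \<Otimes>\<^sub>M \<nu>)"
  have UE: "(UNIV::('a \<times> 'b) set) \<in> {A \<times> B | A B. A \<in> sets borel \<and> B \<in> sets borel}"
    by (rule CollectI, rule exI[of _ UNIV], rule exI[of _ UNIV]) auto
  have fp: "finite_measure (\<mu> \<Otimes>\<^sub>M \<nu>)"
    by (intro finite_measure_pair_measure PM.finite_measure_axioms PN.finite_measure_axioms)
  show "emeasure (rprod \<mu> \<nu>) D = emeasure (\<mu> \<Otimes>\<^sub>M \<nu>) D"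
  proof (rule agree_sigma[OF PR.finite_measure_axioms fp space_R _ rect_Int_stable UE])
    show "space (\<mu> \<Otimes>\<^sub>M \<nu>) = UNIV" by (simp add: space_pair_measure sM sN)
    show "sigma_sets UNIV {A \<times> B | A B. A \<in> sets borel \<and> B \<in> sets borel} \<subseteq> sets (rprod \<mu> \<nu>)"
      using rect_sigma_borel sets_R by simp
    show "sigma_sets UNIV {A \<times> B | A B. A \<in> sets borel \<and> B \<in> sets borel} \<subseteq> sets (\<mu> \<Otimes>\<^sub>M \<nu>)"
      using pair_sets by simp
    show "D \<in> sigma_sets UNIV {A \<times> B | A B. A \<in> sets borel \<and> B \<in> sets borel}"
      using D pair_sets by simp
    fix X :: "('a \<times> 'b) set" assume "X \<in> {A \<times> B | A B. A \<in> sets borel \<and> B \<in> sets borel}"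
    then obtain A B where X: "X = A \<times> B" "A \<in> sets borel" "B \<in> sets borel" by blast
    then show "emeasure (rprod \<mu> \<nu>) X = emeasure (\<mu> \<Otimes>\<^sub>M \<nu>) X"
      using emeasure_R_rect[OF X(2,3)] PN.emeasure_pair_measure_Times[of A \<mu> B] sM sN by simp
  qed
qed

lemma reg_prod_eq: "reg_prod \<mu> \<nu> = rprod \<mu> \<nu>"
  unfolding reg_prod_def
proof (rule the_equality)
  show "regular_borel_prob (rprod \<mu> \<nu>) \<and> (\<forall>D\<in>sets (\<mu> \<Otimes>\<^sub>M \<nu>). emeasure (rprod \<mu> \<nu>) D = emeasure (\<mu> \<Otimes>\<^sub>M \<nu>) D)"
    using rprod_regular rprod_agree by blast
  fix R assume R: "regular_borel_prob R \<and> (\<forall>D\<in>sets (\<mu> \<Otimes>\<^sub>M \<nu>). emeasure R D = emeasure (\<mu> \<Otimes>\<^sub>M \<nu>) D)"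
  show "R = rprod \<mu> \<nu>"
  proof (rule rbp_unique)
    show "regular_borel_prob R" using R by blast
    show "regular_borel_prob (rprod \<mu> \<nu>)" by (rule rprod_regular)
    fix A :: "'a set" and B :: "'b set" assume A: "A \<in> sets borel" and B: "B \<in> sets borel"
    have "A \<times> B \<in> sets (\<mu> \<Otimes>\<^sub>M \<nu>)" using A B sM sN by (intro pair_measureI) auto
    then show "emeasure R (A \<times> B) = emeasure (rprod \<mu> \<nu>) (A \<times> B)"
      using R rprod_agree by auto
  qed
qed

lemma reg_prod_regular: "regular_borel_prob (reg_prod \<mu> \<nu>)"
  using reg_prod_eq rprod_regular by simp

lemma reg_prod_rect:
  "A \<in> sets borel \<Longrightarrow> B \<in> sets borel \<Longrightarrow> measure (reg_prod \<mu> \<nu>) (A \<times> B) = measure \<mu> A * measure \<nu> B"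
  using reg_prod_eq measure_R_rect by simp

end

lemma transl_eq: "(\<lambda>e. e + y) ` E = (\<lambda>e. e - y) -` (E :: 'g::group_add set)"
proof
  show "(\<lambda>e. e + y) ` E \<subseteq> (\<lambda>e. e - y) -` E" by auto
  show "(\<lambda>e. e - y) -` E \<subseteq> (\<lambda>e. e + y) ` E"
  proof
    fix z assume "z \<in> (\<lambda>e. e - y) -` E"
    then have "z - y \<in> E" by simp
    moreover have "z = (z - y) + y" by simp
    ultimately show "z \<in> (\<lambda>e. e + y) ` E" by blast
  qed
qed

lemma transl_borel:
  assumes "E \<in> sets borel"
  shows "(\<lambda>e. e + y) ` E \<in> sets (borel :: 'g::topological_group_add measure)"
proof -
  have "(\<lambda>e. e - y) \<in> borel_measurable (borel :: 'g measure)"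
    by (intro borel_measurable_continuous_onI continuous_intros)
  from measurable_sets_borel[OF this assms] show ?thesis by (simp add: transl_eq)
qed

lemma cont_meas:
  assumes "continuous_on UNIV (f :: 'c::topological_space \<Rightarrow> 'd::topological_space)" "D \<in> sets borel"
  shows "f -` D \<in> sets borel"
  using measurable_sets_borel[OF borel_measurable_continuous_onI[OF assms(1)] assms(2)] .

theorem lemma3p4:
  fixes L :: "'g::{topological_group_add, t2_space} measure"
    and M1 :: "'a::t2_space measure" and M2 :: "'b::t2_space measure"
    and f1 :: "'a \<Rightarrow> 'g" and f2 :: "'b \<Rightarrow> 'g"
    and P :: "'g set set" and y :: 'g
  assumes "compact (UNIV :: 'a set)" and "compact (UNIV :: 'b set)"
    and "compact (UNIV :: 'g set)"
    and "haar_prob L"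
    and "continuous_on UNIV f1" and "surj f1"
    and "continuous_on UNIV f2" and "surj f2"
    and "regular_borel_prob M1" and "regular_borel_prob M2"
    and "image_measure_eq f1 M1 (measure L)"
    and "image_measure_eq f2 M2 (measure L)"
    and "finite_borel_partition P"
  shows "\<exists>R. regular_borel_prob R
           \<and> (\<forall>D\<in>sets borel. measure R D = mu_yE L M1 M2 f1 f2 y P D)
           \<and> image_measure_eq (\<lambda>(u, v). (f1 u, f2 v)) R (nu_yE L y P)
           \<and> (\<forall>A\<in>sets (borel :: 'a measure). mu_yE L M1 M2 f1 f2 y P (A \<times> UNIV) = measure M1 A)
           \<and> (\<forall>B\<in>sets (borel :: 'b measure). mu_yE L M1 M2 f1 f2 y P (UNIV \<times> B) = measure M2 B)"
proof -
  note cA = assms(1) and cB = assms(2) and cG = assms(3)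
  have Lreg: "regular_borel_prob L" and haar: "\<And>E y. E \<in> sets borel \<Longrightarrow> measure L ((\<lambda>e. e + y) ` E) = measure L E"
    using assms(4) unfolding haar_prob_def by auto
  note cf1 = assms(5) and cf2 = assms(7) and M1 = assms(9) and M2 = assms(10)
  have im1: "\<And>D. D \<in> sets borel \<Longrightarrow> measure M1 (f1 -` D) = measure L D"
    using assms(11) unfolding image_measure_eq_def by auto
  have im2: "\<And>D. D \<in> sets borel \<Longrightarrow> measure M2 (f2 -` D) = measure L D"
    using assms(12) unfolding image_measure_eq_def by auto
  have Pfin: "finite P" and Pb: "\<And>E. E \<in> P \<Longrightarrow> E \<in> sets borel" and PU: "\<Union>P = UNIV"
    and Pdisj: "\<And>E F. E \<in> P \<Longrightarrow> F \<in> P \<Longrightarrow> E \<noteq> F \<Longrightarrow> E \<inter> F = {}"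
    using assms(13) unfolding finite_borel_partition_def by auto
  interpret Q12: rp M1 M2 using M1 M2 cA cB by unfold_locales
  interpret QLL: rp L L using Lreg cG by unfold_locales
  interpret PL: prob_space L using rbp_basic[OF Lreg] by simp
  have sL: "sets L = sets borel" "space L = UNIV" using rbp_basic[OF Lreg] by auto
  have sM1: "sets M1 = sets borel" "space M1 = UNIV" using rbp_basic[OF M1] by auto
  have sM2: "sets M2 = sets borel" "space M2 = UNIV" using rbp_basic[OF M2] by auto
  define Q where "Q = reg_prod M1 M2"
  define QL where "QL = reg_prod L L"
  have Qreg: "regular_borel_prob Q" unfolding Q_def by (rule Q12.reg_prod_regular)
  have QLreg: "regular_borel_prob QL" unfolding QL_def by (rule QLL.reg_prod_regular)
  interpret PQ: prob_space Q using rbp_basic[OF Qreg] by simp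
  interpret PQL: prob_space QL using rbp_basic[OF QLreg] by simp
  have sQ: "sets Q = sets borel" "space Q = UNIV" using rbp_basic[OF Qreg] by auto
  have sQL: "sets QL = sets borel" "space QL = UNIV" using rbp_basic[OF QLreg] by auto
  have Qrect: "\<And>A B. A \<in> sets borel \<Longrightarrow> B \<in> sets borel \<Longrightarrow> measure Q (A \<times> B) = measure M1 A * measure M2 B"
    unfolding Q_def by (rule Q12.reg_prod_rect)
  have QLrect: "\<And>A B. A \<in> sets borel \<Longrightarrow> B \<in> sets borel \<Longrightarrow> measure QL (A \<times> B) = measure L A * measure L B"
    unfolding QL_def by (rule QLL.reg_prod_rect)
  define f where "f = (\<lambda>(u, v). (f1 u, f2 v))"
  have f_alt: "f = (\<lambda>z. (f1 (fst z), f2 (snd z)))" unfolding f_def by auto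
  have c1: "continuous_on UNIV (\<lambda>x::'a \<times> 'b. f1 (fst x))"
    by (rule continuous_on_compose2[OF cf1, of UNIV fst]) (auto intro: continuous_intros)
  have c2: "continuous_on UNIV (\<lambda>x::'a \<times> 'b. f2 (snd x))"
    by (rule continuous_on_compose2[OF cf2, of UNIV snd]) (auto intro: continuous_intros)
  have fc: "continuous_on UNIV f" unfolding f_alt using c1 c2 by (intro continuous_on_Pair)
  have f1b: "\<And>E. E \<in> sets borel \<Longrightarrow> f1 -` E \<in> sets borel" using cont_meas[OF cf1] by blast
  have f2b: "\<And>E. E \<in> sets borel \<Longrightarrow> f2 -` E \<in> sets borel" using cont_meas[OF cf2] by blast
  have fb: "\<And>D. D \<in> sets borel \<Longrightarrow> f -` D \<in> sets borel" using cont_meas[OF fc] by blast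
  have distr_eq: "distr Q borel f = QL"
  proof (rule rbp_unique[OF rbp_distr[OF Qreg fc] QLreg])
    fix A B :: "'g set" assume A: "A \<in> sets borel" and B: "B \<in> sets borel"
    have fm: "f \<in> measurable Q borel"
      using borel_measurable_continuous_onI[OF fc] measurable_cong_sets[OF sQ(1) refl] by blast
    have pre: "f -` (A \<times> B) = f1 -` A \<times> f2 -` B" unfolding f_def by auto
    have "emeasure (distr Q borel f) (A \<times> B) = emeasure Q (f1 -` A \<times> f2 -` B)"
      using emeasure_distr[OF fm borel_Times[OF A B]] sQ(2) pre by simp
    also have "\<dots> = ennreal (measure L A * measure L B)"
      using Qrect[OF f1b[OF A] f2b[OF B]] im1[OF A] im2[OF B] by (simp add: PQ.emeasure_eq_measure)
    also have "\<dots> = emeasure QL (A \<times> B)"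
      using QLrect[OF A B] by (simp add: PQL.emeasure_eq_measure)
    finally show "emeasure (distr Q borel f) (A \<times> B) = emeasure QL (A \<times> B)" .
  qed
  have QfQL: "\<And>D. D \<in> sets borel \<Longrightarrow> measure Q (f -` D) = measure QL D"
  proof -
    fix D :: "('g \<times> 'g) set" assume D: "D \<in> sets borel"
    have fm: "f \<in> measurable Q borel"
      using borel_measurable_continuous_onI[OF fc] measurable_cong_sets[OF sQ(1) refl] by blast
    have "measure (distr Q borel f) D = measure Q (f -` D)"
      using measure_distr[OF fm D] sQ(2) by simp
    then show "measure Q (f -` D) = measure QL D" using distr_eq by simp
  qed
  define Ps where "Ps = pos_part L P"
  have PsP: "Ps \<subseteq> P" and Psfin: "finite Ps" and Pspos: "\<And>E. E \<in> Ps \<Longrightarrow> measure L E > 0"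
    unfolding Ps_def pos_part_def using Pfin by (auto intro: finite_subset)
  have Pzero: "\<And>E. E \<in> P - Ps \<Longrightarrow> measure L E = 0"
    unfolding Ps_def pos_part_def using measure_nonneg[of L] by (auto simp: not_less intro: antisym)
  define S where "S E = f1 -` E \<times> f2 -` ((\<lambda>e. e + y) ` E)" for E
  have trb: "\<And>E. E \<in> P \<Longrightarrow> (\<lambda>e. e + y) ` E \<in> sets borel" using Pb transl_borel by blast
  have Sb: "S E \<in> sets borel" if "E \<in> P" for E
    unfolding S_def using f1b[OF Pb[OF that]] f2b[OF trb[OF that]] by (rule borel_Times)
  have QS: "\<And>E. E \<in> P \<Longrightarrow> measure Q (S E) = measure L E * measure L E"
    unfolding S_def using Qrect f1b f2b Pb trb im1 im2 haar by simp
  have mu_eq: "\<And>D. mu_yE L M1 M2 f1 f2 y P D = (\<Sum>E\<in>Ps. measure Q (D \<inter> S E) / measure L E)"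
    by (simp add: mu_yE_def Q_def S_def Ps_def)
  have nu_eq: "\<And>D. nu_yE L y P D = (\<Sum>E\<in>Ps. measure QL (D \<inter> (E \<times> (\<lambda>e. e + y) ` E)) / measure L E)"
    by (simp add: nu_yE_def QL_def Ps_def)
  define dens where "dens z = (\<Sum>E\<in>Ps. indicator (S E) z / measure L E)" for z :: "'a \<times> 'b"
  have dens0: "\<And>z. 0 \<le> dens z" unfolding dens_def by (intro sum_nonneg) auto
  have densm: "dens \<in> borel_measurable Q"
    unfolding dens_def using Sb PsP sQ(1)
    by (intro borel_measurable_sum borel_measurable_divide borel_measurable_indicator) auto
  define R where "R = density Q (\<lambda>z. ennreal (dens z))"
  have sR: "sets R = sets borel" unfolding R_def using sQ by simp
  have spR: "space R = UNIV" unfolding R_def using sQ by simp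
  have eR: "emeasure R D = ennreal (\<Sum>E\<in>Ps. measure Q (D \<inter> S E) / measure L E)"
    if D: "D \<in> sets borel" for D
  proof -
    have DS: "\<And>E. E \<in> Ps \<Longrightarrow> D \<inter> S E \<in> sets Q" using D Sb PsP sQ by auto
    have pw: "ennreal (dens z) * indicator D z = ennreal (\<Sum>E\<in>Ps. indicator (D \<inter> S E) z / measure L E)" for z
    proof -
      have eq: "dens z * indicator D z = (\<Sum>E\<in>Ps. indicator (D \<inter> S E) z / measure L E)"
        unfolding dens_def sum_distrib_right by (intro sum.cong) (auto simp: indicator_def)
      have "ennreal (dens z) * indicator D z = ennreal (dens z * indicator D z)"
        by (cases "z \<in> D") auto
      also have "\<dots> = ennreal (\<Sum>E\<in>Ps. indicator (D \<inter> S E) z / measure L E)" by (simp only: eq)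
      finally show ?thesis .
    qed
    have int: "integrable Q (\<lambda>z. \<Sum>E\<in>Ps. indicator (D \<inter> S E) z / measure L E)"
    proof (rule Bochner_Integration.integrable_sum)
      fix E assume E: "E \<in> Ps"
      have "integrable Q (indicator (D \<inter> S E) :: _ \<Rightarrow> real)"
        using DS[OF E] by (rule integrable_real_indicator) (simp add: PQ.emeasure_eq_measure)
      then show "integrable Q (\<lambda>z. indicator (D \<inter> S E) z / measure L E)"
        by (rule integrable_divide_zero)
    qed
    have "emeasure R D = (\<integral>\<^sup>+z. ennreal (dens z) * indicator D z \<partial>Q)"
      unfolding R_def using densm D sQ by (subst emeasure_density) auto
    also have "\<dots> = (\<integral>\<^sup>+z. ennreal (\<Sum>E\<in>Ps. indicator (D \<inter> S E) z / measure L E) \<partial>Q)"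
      using pw by simp
    also have "\<dots> = ennreal (\<integral>z. (\<Sum>E\<in>Ps. indicator (D \<inter> S E) z / measure L E) \<partial>Q)"
      using int by (intro nn_integral_eq_integral) (auto intro!: sum_nonneg)
    also have "(\<integral>z. (\<Sum>E\<in>Ps. indicator (D \<inter> S E) z / measure L E) \<partial>Q) = (\<Sum>E\<in>Ps. measure Q (D \<inter> S E) / measure L E)"
      using DS sQ(2) by (subst Bochner_Integration.integral_sum) (auto intro!: integrable_divide_zero integrable_real_indicator simp: PQ.emeasure_eq_measure)
    finally show ?thesis .
  qed
  have mR: "measure R D = (\<Sum>E\<in>Ps. measure Q (D \<inter> S E) / measure L E)" if D: "D \<in> sets borel" for D
    using eR[OF D] unfolding measure_def by (simp add: sum_nonneg)
  have sumP: "(\<Sum>E\<in>Ps. measure L E) = 1"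
  proof -
    have "(\<Sum>E\<in>Ps. measure L E) = (\<Sum>E\<in>P. measure L E)"
      using Pfin PsP Pzero by (intro sum.mono_neutral_left) auto
    also have "\<dots> = measure L (\<Union>E\<in>P. E)"
      using Pfin Pb Pdisj sL(1)
      by (intro measure_finite_Union[symmetric]) (auto simp: disjoint_family_on_def QLL.PM.emeasure_eq_measure)
    also have "\<dots> = 1" using PU sL(2) QLL.PM.prob_space by simp
    finally show ?thesis .
  qed
  have probR: "prob_space R"
  proof (rule prob_spaceI)
    have "emeasure R UNIV = ennreal (\<Sum>E\<in>Ps. measure Q (S E) / measure L E)" using eR[of UNIV] by simp
    also have "(\<Sum>E\<in>Ps. measure Q (S E) / measure L E) = (\<Sum>E\<in>Ps. measure L E)"
      using QS PsP Pspos by (intro sum.cong) (auto simp: subset_iff)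
    finally show "emeasure R (space R) = 1" using sumP spR by simp
  qed
  have Rreg: "regular_borel_prob R"
  proof (rule rbp_dominated[OF Qreg probR sR])
    show "0 \<le> (\<Sum>E\<in>Ps. 1 / measure L E)" by (intro sum_nonneg) auto
    fix A :: "('a \<times> 'b) set" assume A: "A \<in> sets borel"
    have "measure R A = (\<Sum>E\<in>Ps. measure Q (A \<inter> S E) / measure L E)" by (rule mR[OF A])
    also have "\<dots> \<le> (\<Sum>E\<in>Ps. measure Q A / measure L E)"
      using A sQ Pspos by (intro sum_mono divide_right_mono PQ.finite_measure_mono) (auto simp: less_imp_le)
    also have "\<dots> = (\<Sum>E\<in>Ps. 1 / measure L E) * measure Q A"
      by (simp add: sum_distrib_right)
    finally show "measure R A \<le> (\<Sum>E\<in>Ps. 1 / measure L E) * measure Q A" .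
  qed
  show ?thesis
  proof (intro exI[of _ R] conjI ballI)
    show "regular_borel_prob R" by (rule Rreg)
    fix D :: "('a \<times> 'b) set" assume D: "D \<in> sets borel"
    show "measure R D = mu_yE L M1 M2 f1 f2 y P D" using mR[OF D] mu_eq by simp
  next
    show "image_measure_eq (\<lambda>(u, v). (f1 u, f2 v)) R (nu_yE L y P)"
      unfolding image_measure_eq_def
    proof
      fix D :: "('g \<times> 'g) set" assume D: "D \<in> sets borel"
      have "measure R ((\<lambda>(u, v). (f1 u, f2 v)) -` D) = measure R (f -` D)" unfolding f_def ..
      also have "\<dots> = (\<Sum>E\<in>Ps. measure Q (f -` D \<inter> S E) / measure L E)" by (rule mR[OF fb[OF D]])
      also have "\<dots> = (\<Sum>E\<in>Ps. measure QL (D \<inter> (E \<times> (\<lambda>e. e + y) ` E)) / measure L E)"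
      proof (intro sum.cong refl)
        fix E assume E: "E \<in> Ps"
        have eq1: "f -` D \<inter> S E = f -` (D \<inter> (E \<times> (\<lambda>e. e + y) ` E))" unfolding S_def f_def by auto
        have "D \<inter> (E \<times> (\<lambda>e. e + y) ` E) \<in> sets borel"
          using D E PsP Pb trb by (intro sets.Int borel_Times) auto
        then have eq2: "measure Q (f -` (D \<inter> (E \<times> (\<lambda>e. e + y) ` E))) = measure QL (D \<inter> (E \<times> (\<lambda>e. e + y) ` E))"
          by (rule QfQL)
        show "measure Q (f -` D \<inter> S E) / measure L E = measure QL (D \<inter> (E \<times> (\<lambda>e. e + y) ` E)) / measure L E"
          by (simp only: eq1 eq2)
      qed
      also have "\<dots> = nu_yE L y P D" using nu_eq by simp
      finally show "measure R ((\<lambda>(u, v). (f1 u, f2 v)) -` D) = nu_yE L y P D" .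
    qed
  next
    fix A :: "'a set" assume A: "A \<in> sets borel"
    have "mu_yE L M1 M2 f1 f2 y P (A \<times> UNIV) = (\<Sum>E\<in>Ps. measure Q ((A \<times> UNIV) \<inter> S E) / measure L E)"
      by (rule mu_eq)
    also have "\<dots> = (\<Sum>E\<in>Ps. measure M1 (A \<inter> f1 -` E))"
    proof (intro sum.cong refl)
      fix E assume E: "E \<in> Ps"
      have "(A \<times> UNIV) \<inter> S E = (A \<inter> f1 -` E) \<times> f2 -` ((\<lambda>e. e + y) ` E)" unfolding S_def by auto
      moreover have "measure Q ((A \<inter> f1 -` E) \<times> f2 -` ((\<lambda>e. e + y) ` E)) = measure M1 (A \<inter> f1 -` E) * measure L E"
        using Qrect[of "A \<inter> f1 -` E" "f2 -` ((\<lambda>e. e + y) ` E)"] A E PsP Pb f1b f2b trb im2 haar by auto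
      ultimately show "measure Q ((A \<times> UNIV) \<inter> S E) / measure L E = measure M1 (A \<inter> f1 -` E)"
        using Pspos[OF E] by simp
    qed
    also have "\<dots> = (\<Sum>E\<in>P. measure M1 (A \<inter> f1 -` E))"
    proof (intro sum.mono_neutral_left Pfin PsP ballI)
      fix E assume E: "E \<in> P - Ps"
      have "measure M1 (A \<inter> f1 -` E) \<le> measure M1 (f1 -` E)"
        using E Pb f1b sM1 by (intro Q12.PM.finite_measure_mono) auto
      also have "\<dots> = 0" using im1 E Pb Pzero by auto
      finally show "measure M1 (A \<inter> f1 -` E) = 0" using measure_nonneg[of M1] by (meson antisym)
    qed
    also have "\<dots> = measure M1 (\<Union>E\<in>P. A \<inter> f1 -` E)"
      using Pfin Pb Pdisj sM1(1) A f1b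
      by (intro measure_finite_Union[symmetric]) (auto simp: disjoint_family_on_def Q12.PM.emeasure_eq_measure)
    also have "(\<Union>E\<in>P. A \<inter> f1 -` E) = A" using PU by auto
    finally show "mu_yE L M1 M2 f1 f2 y P (A \<times> UNIV) = measure M1 A" .
  next
    fix B :: "'b set" assume B: "B \<in> sets borel"
    have "mu_yE L M1 M2 f1 f2 y P (UNIV \<times> B) = (\<Sum>E\<in>Ps. measure Q ((UNIV \<times> B) \<inter> S E) / measure L E)"
      by (rule mu_eq)
    also have "\<dots> = (\<Sum>E\<in>Ps. measure M2 (B \<inter> f2 -` ((\<lambda>e. e + y) ` E)))"
    proof (intro sum.cong refl)
      fix E assume E: "E \<in> Ps"
      have "(UNIV \<times> B) \<inter> S E = f1 -` E \<times> (B \<inter> f2 -` ((\<lambda>e. e + y) ` E))" unfolding S_def by auto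
      moreover have "measure Q (f1 -` E \<times> (B \<inter> f2 -` ((\<lambda>e. e + y) ` E))) = measure L E * measure M2 (B \<inter> f2 -` ((\<lambda>e. e + y) ` E))"
        using Qrect[of "f1 -` E" "B \<inter> f2 -` ((\<lambda>e. e + y) ` E)"] B E PsP Pb f1b f2b trb im1 by auto
      ultimately show "measure Q ((UNIV \<times> B) \<inter> S E) / measure L E = measure M2 (B \<inter> f2 -` ((\<lambda>e. e + y) ` E))"
        using Pspos[OF E] by simp
    qed
    also have "\<dots> = (\<Sum>E\<in>P. measure M2 (B \<inter> f2 -` ((\<lambda>e. e + y) ` E)))"
    proof (intro sum.mono_neutral_left Pfin PsP ballI)
      fix E assume E: "E \<in> P - Ps"
      have "measure M2 (B \<inter> f2 -` ((\<lambda>e. e + y) ` E)) \<le> measure M2 (f2 -` ((\<lambda>e. e + y) ` E))"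
        using E Pb f2b trb sM2 by (intro Q12.PN.finite_measure_mono) auto
      also have "\<dots> = 0" using im2 E Pb trb haar Pzero by auto
      finally show "measure M2 (B \<inter> f2 -` ((\<lambda>e. e + y) ` E)) = 0" using measure_nonneg[of M2] by (meson antisym)
    qed
    also have "\<dots> = measure M2 (\<Union>E\<in>P. B \<inter> f2 -` ((\<lambda>e. e + y) ` E))"
    proof (intro measure_finite_Union[symmetric] Pfin)
      show "(\<lambda>E. B \<inter> f2 -` ((\<lambda>e. e + y) ` E)) ` P \<subseteq> sets M2"
        using B trb f2b sM2(1) by auto
      show "disjoint_family_on (\<lambda>E. B \<inter> f2 -` ((\<lambda>e. e + y) ` E)) P"
        unfolding disjoint_family_on_def
      proof (intro ballI impI)
        fix E F assume "E \<in> P" "F \<in> P" "E \<noteq> F"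
        then have "E \<inter> F = {}" using Pdisj by blast
        then show "B \<inter> f2 -` ((\<lambda>e. e + y) ` E) \<inter> (B \<inter> f2 -` ((\<lambda>e. e + y) ` F)) = {}"
          by (auto simp: transl_eq)
      qed
      show "\<And>E. E \<in> P \<Longrightarrow> emeasure M2 (B \<inter> f2 -` ((\<lambda>e. e + y) ` E)) \<noteq> \<infinity>"
        by (simp add: Q12.PN.emeasure_eq_measure)
    qed
    also have "(\<Union>E\<in>P. B \<inter> f2 -` ((\<lambda>e. e + y) ` E)) = B"
    proof -
      have "(\<Union>E\<in>P. (\<lambda>e. e + y) ` E) = UNIV"
      proof -
        have "z \<in> (\<Union>E\<in>P. (\<lambda>e. e + y) ` E)" for z
        proof -
          obtain E where "E \<in> P" "z - y \<in> E" using PU by blast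
          then show ?thesis by (auto simp: transl_eq)
        qed
        then show ?thesis by blast
      qed
      then show ?thesis by blast
    qed
    finally show "mu_yE L M1 M2 f1 f2 y P (UNIV \<times> B) = measure M2 B" .
  qed
qed

end
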